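(* Let $d\le n$, $\beta\in\mathbb{R}^d$, $\epsilon\in\mathbb{R}^n$, $X\in\mathbb{R}^{n\times d}$, $G_n\subseteq\{1,\dots,n\}$, and $o\in\mathbb{R}^n$ with $o_i=0$ for all $i\notin G_n$; set $Y:=X\beta+\epsilon+o$. Assume there is a known $c_n\in\mathbb{N}$ with $|G_n|\le c_n$, let $a_n:=n-c_n$, and let $S_t$ be the set computed in the final iteration of Torrent run on $X,Y$ with threshold parameter $a_n$, and $\hat\beta^{n,a_n}_{\mathrm{Tor}}$ its output. For $S\subseteq\{1,\dots,n\}$ let $V(S):=(S\cup G_n^{\mathsf c})\setminus(G_n^{\mathsf c}\cap S)$, where $G_n^{\mathsf c}=\{1,\dots,n\}\setminus G_n$. Assume \[ \eta:=\max_{S\subseteq\{1,\dots,n\},\,|S|=a_n}\frac{\|X_{V(S)}\|_2}{\sqrt{\lambda_{\min}(X_S^\top X_S)}}<\frac{1}{\sqrt2}. \] Then \[ \|\hat\beta^{n,a_n}_{\mathrm{Tor}}-\beta\|_2\le\big\|(X_{S_t}^\top X_{S_t})^{-1}X_{S_t}^\top\epsilon_{S_t}\big\|_2+\frac{\sqrt2\|X_{V(S_t)}\|_2\big\|(X_{S_t}^\top X_{S_t})^{-1}X_{S_t}^\top\epsilon_{S_t}\big\|_2+\sqrt2\|\epsilon_{V(S_t)}\|_2}{\sqrt{\lambda_{\min}(X_{S_t}^\top X_{S_t})}\,(1-\sqrt2\eta)}. \]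
   Context: $\lambda_{\min}$ denotes the minimal eigenvalue and $\|\cdot\|_2$ the Euclidean norm for vectors and the spectral norm for matrices; $X_S,\epsilon_S$ denote rows/entries with indices in $S$. $\hat\beta^S_{\mathrm{OLS}}(X,Y):=(X_S^\top X_S)^{+}X_S^\top Y_S$. $\mathrm{HT}(v,a)$ is the set of indices of the $a$ smallest entries of $v$, ties broken by a fixed deterministic rule. Torrent with threshold $a$: $S_0=\{1,\dots,n\}$, $e=Y$, $\mathrm{err}=\infty$, $t=0$; while $\|e\|_2<\mathrm{err}$ (with $e$ indexed by the current set $S_t$): $t\gets t+1$, $\mathrm{err}\gets\|e\|_2$, $\hat\beta^t\gets\hat\beta^{S_{t-1}}_{\mathrm{OLS}}(X,Y)$, $v\gets|Y-X\hat\beta^t|$, $S_t\gets\mathrm{HT}(v,a)$, $e\gets|Y_{S_t}-X_{S_t}\hat\beta^t|$; output $\hat\beta^{n,a}_{\mathrm{Tor}}:=\hat\beta^t$. *)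

theory Defs
  imports "Jordan_Normal_Form.DL_Submatrix" "Jordan_Normal_Form.Char_Poly"
begin

text \<open>Indices are 0-based: rows 0..<n, columns 0..<d.\<close>

definition norm2 :: "real vec \<Rightarrow> real" where
  "norm2 v = sqrt (v \<bullet> v)"

definition spec_norm :: "real mat \<Rightarrow> real" where
  "spec_norm A = Sup {norm2 (A *\<^sub>v v) | v. v \<in> carrier_vec (dim_col A) \<and> norm2 v \<le> 1}"

definition lambda_min :: "real mat \<Rightarrow> real" where
  "lambda_min A = Min {k. eigenvalue A k}"

text \<open>Rows of X (entries of v) with indices in S, in increasing order.\<close>
definition rows :: "real mat \<Rightarrow> nat set \<Rightarrow> real mat" where
  "rows X S = submatrix X S UNIV"

definition subvec :: "real vec \<Rightarrow> nat set \<Rightarrow> real vec" where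
  "subvec v S = vec (card {i. i < dim_vec v \<and> i \<in> S}) (\<lambda>i. v $ pick S i)"

definition pinv :: "real mat \<Rightarrow> real mat" where
  "pinv A = (THE B. B \<in> carrier_mat (dim_col A) (dim_row A) \<and> A * B * A = A \<and> B * A * B = B
     \<and> transpose_mat (A * B) = A * B \<and> transpose_mat (B * A) = B * A)"

definition minv :: "real mat \<Rightarrow> real mat" where
  "minv A = (THE B. inverts_mat A B \<and> inverts_mat B A)"

definition ols :: "real mat \<Rightarrow> real vec \<Rightarrow> nat set \<Rightarrow> real vec" where
  "ols X Y S = pinv (transpose_mat (rows X S) * rows X S) *\<^sub>v (transpose_mat (rows X S) *\<^sub>v subvec Y S)"

text \<open>Specification of hard thresholding HT(v,a) on indices 0..<n: the set of indices of
  a smallest entries; ht is a fixed (deterministic) rule meeting this specification.\<close>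
definition is_HT :: "nat \<Rightarrow> ((nat \<Rightarrow> real) \<Rightarrow> nat \<Rightarrow> nat set) \<Rightarrow> bool" where
  "is_HT n ht \<longleftrightarrow> (\<forall>v a. a \<le> n \<longrightarrow>
      ht v a \<subseteq> {..<n} \<and> card (ht v a) = a \<and>
      (\<forall>i \<in> ht v a. \<forall>j<n. j \<notin> ht v a \<longrightarrow> v i \<le> v j))"

fun tor_S :: "((nat \<Rightarrow> real) \<Rightarrow> nat \<Rightarrow> nat set) \<Rightarrow> real mat \<Rightarrow> real vec \<Rightarrow> nat \<Rightarrow> nat \<Rightarrow> nat set" where
  "tor_S ht X Y a 0 = {..<dim_vec Y}"
| "tor_S ht X Y a (Suc t) =
     ht (\<lambda>i. \<bar>(Y - X *\<^sub>v ols X Y (tor_S ht X Y a t)) $ i\<bar>) a"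

definition tor_beta :: "((nat \<Rightarrow> real) \<Rightarrow> nat \<Rightarrow> nat set) \<Rightarrow> real mat \<Rightarrow> real vec \<Rightarrow> nat \<Rightarrow> nat \<Rightarrow> real vec" where
  "tor_beta ht X Y a t = ols X Y (tor_S ht X Y a (t - 1))"

definition tor_err :: "((nat \<Rightarrow> real) \<Rightarrow> nat \<Rightarrow> nat set) \<Rightarrow> real mat \<Rightarrow> real vec \<Rightarrow> nat \<Rightarrow> nat \<Rightarrow> real" where
  "tor_err ht X Y a t = (if t = 0 then norm2 Y else
     norm2 (map_vec abs (subvec Y (tor_S ht X Y a t) - rows X (tor_S ht X Y a t) *\<^sub>v tor_beta ht X Y a t)))"

text \<open>Index of the final iteration: the loop body runs at t = 1 (err = \<infinity>) and continues
  while the new residual norm is strictly smaller than the previous one.\<close>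
definition tor_T :: "((nat \<Rightarrow> real) \<Rightarrow> nat \<Rightarrow> nat set) \<Rightarrow> real mat \<Rightarrow> real vec \<Rightarrow> nat \<Rightarrow> nat" where
  "tor_T ht X Y a = (LEAST t. t \<ge> 1 \<and> \<not> tor_err ht X Y a t < tor_err ht X Y a (t - 1))"

definition torrent :: "((nat \<Rightarrow> real) \<Rightarrow> nat \<Rightarrow> nat set) \<Rightarrow> real mat \<Rightarrow> real vec \<Rightarrow> nat \<Rightarrow> real vec" where
  "torrent ht X Y a = tor_beta ht X Y a (tor_T ht X Y a)"

definition torrent_set :: "((nat \<Rightarrow> real) \<Rightarrow> nat \<Rightarrow> nat set) \<Rightarrow> real mat \<Rightarrow> real vec \<Rightarrow> nat \<Rightarrow> nat set" where
  "torrent_set ht X Y a = tor_S ht X Y a (tor_T ht X Y a)"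

definition Vset :: "nat \<Rightarrow> nat set \<Rightarrow> nat set \<Rightarrow> nat set" where
  "Vset n G S = (S \<union> ({..<n} - G)) - (({..<n} - G) \<inter> S)"

definition eta :: "real mat \<Rightarrow> nat \<Rightarrow> nat set \<Rightarrow> nat \<Rightarrow> real" where
  "eta X n G a = Max ((\<lambda>S. spec_norm (rows X (Vset n G S)) /
       sqrt (lambda_min (transpose_mat (rows X S) * rows X S))) ` {S. S \<subseteq> {..<n} \<and> card S = a})"

end

theory Submission
  imports Defs "HOL-Analysis.L2_Norm"
begin

lemma norm2_L2: "norm2 v = L2_set (\<lambda>i. v $ i) {..<dim_vec v}"
  unfolding norm2_def L2_set_def scalar_prod_def
  by (simp add: power2_eq_square atLeast0LessThan)

lemma norm2_nonneg[simp]: "0 \<le> norm2 v"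
  by (simp add: norm2_L2)

lemma norm2_sq: "(norm2 v)^2 = v \<bullet> v"
  unfolding norm2_def
  by (simp add: scalar_prod_def sum_nonneg)

lemma sprod_sum: "dim_vec u = dim_vec v \<Longrightarrow> u \<bullet> v = (\<Sum>i<dim_vec v. u $ i * v $ i)"
  unfolding scalar_prod_def by (simp add: atLeast0LessThan)

lemma cauchy_schwarz: assumes "dim_vec u = dim_vec v"
  shows "\<bar>u \<bullet> v\<bar> \<le> norm2 u * norm2 v"
proof -
  have "\<bar>u \<bullet> v\<bar> = \<bar>\<Sum>i<dim_vec v. u $ i * v $ i\<bar>" by (simp only: sprod_sum[OF assms])
  also have "\<dots> \<le> (\<Sum>i<dim_vec v. \<bar>u $ i * v $ i\<bar>)" by (rule sum_abs)
  also have "\<dots> = (\<Sum>i<dim_vec v. \<bar>u $ i\<bar> * \<bar>v $ i\<bar>)" by (simp only: abs_mult)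
  also have "\<dots> \<le> L2_set (\<lambda>i. u $ i) {..<dim_vec v} * L2_set (\<lambda>i. v $ i) {..<dim_vec v}"
    by (rule L2_set_mult_ineq)
  also have "\<dots> = norm2 u * norm2 v" using assms by (simp only: norm2_L2)
  finally show ?thesis .
qed

lemma pick_bij: assumes "finite S"
  shows "bij_betw (pick S) {..<card S} S"
proof -
  have inj: "inj_on (pick S) {..<card S}"
    by (rule inj_onI, metis lessThan_iff nat_neq_iff pick_mono_le)
  have sub: "pick S ` {..<card S} \<subseteq> S" using pick_in_set_le by auto
  have "card (pick S ` {..<card S}) = card S" using card_image[OF inj] by simp
  then have "pick S ` {..<card S} = S" using card_subset_eq[OF assms sub] by simp
  then show ?thesis using inj unfolding bij_betw_def by simp
qed

lemma sum_pick: assumes "finite S"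
  shows "(\<Sum>k<card S. f (pick S k)) = (\<Sum>i\<in>S. f i)"
  using sum.reindex_bij_betw[OF pick_bij[OF assms], of f] by simp

lemma card_restr: "S \<subseteq> {..<n} \<Longrightarrow> card {i. i < n \<and> i \<in> S} = card S"
  by (rule arg_cong[where f=card]) auto

lemma dim_subvec: "S \<subseteq> {..<dim_vec v} \<Longrightarrow> dim_vec (subvec v S) = card S"
  unfolding subvec_def using card_restr[of S "dim_vec v"] by simp

lemma subvec_index: "S \<subseteq> {..<dim_vec v} \<Longrightarrow> k < card S \<Longrightarrow> subvec v S $ k = v $ pick S k"
  unfolding subvec_def using card_restr[of S "dim_vec v"] by simp

lemma subvec_sprod: assumes "S \<subseteq> {..<dim_vec u}" "dim_vec w = dim_vec u"
  shows "subvec u S \<bullet> subvec w S = (\<Sum>i\<in>S. u $ i * w $ i)"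
proof -
  have fin: "finite S" using assms(1) finite_subset by blast
  have "subvec u S \<bullet> subvec w S = (\<Sum>k<card S. u $ pick S k * w $ pick S k)"
    using assms by (subst sprod_sum) (simp_all add: dim_subvec subvec_index)
  also have "\<dots> = (\<Sum>i\<in>S. u $ i * w $ i)" by (rule sum_pick[OF fin])
  finally show ?thesis .
qed

lemma norm2_subvec: assumes "S \<subseteq> {..<dim_vec v}"
  shows "norm2 (subvec v S) = L2_set (\<lambda>i. v $ i) S"
  unfolding norm2_def L2_set_def subvec_sprod[OF assms refl]
  by (simp add: power2_eq_square)

lemma rows_dim: assumes "X \<in> carrier_mat n d" "S \<subseteq> {..<n}"
  shows "rows X S \<in> carrier_mat (card S) d"
proof -
  have "dim_row (rows X S) = card S" unfolding rows_def dim_submatrix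
    using assms card_restr[of S n] by simp
  moreover have "dim_col (rows X S) = d" unfolding rows_def dim_submatrix
    using assms by simp
  ultimately show ?thesis by blast
qed

lemma rows_mult: assumes X: "X \<in> carrier_mat n d" and S: "S \<subseteq> {..<n}" and b: "b \<in> carrier_vec d"
  shows "rows X S *\<^sub>v b = subvec (X *\<^sub>v b) S"
proof (rule eq_vecI)
  have R: "rows X S \<in> carrier_mat (card S) d" by (rule rows_dim[OF X S])
  have S': "S \<subseteq> {..<dim_vec (X *\<^sub>v b)}" using X S by simp
  show "dim_vec (rows X S *\<^sub>v b) = dim_vec (subvec (X *\<^sub>v b) S)"
    using R dim_subvec[OF S'] by simp
  fix k assume "k < dim_vec (subvec (X *\<^sub>v b) S)"
  then have k: "k < card S" using dim_subvec[OF S'] by simp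
  have pk: "pick S k < n" using pick_in_set_le[OF k] S by auto
  have rw: "row (rows X S) k = row X (pick S k)"
  proof (rule eq_vecI)
    show "dim_vec (row (rows X S) k) = dim_vec (row X (pick S k))" using R X by simp
    fix j assume "j < dim_vec (row X (pick S k))"
    then have j: "j < d" using X by simp
    have "row (rows X S) k $ j = rows X S $$ (k, j)" using R k j by simp
    also have "\<dots> = X $$ (pick S k, pick UNIV j)" unfolding rows_def
      by (rule submatrix_index) (use X S k j card_restr[OF S] in auto)
    also have "\<dots> = row X (pick S k) $ j" using X pk j by (simp add: pick_UNIV)
    finally show "row (rows X S) k $ j = row X (pick S k) $ j" .
  qed
  have "(rows X S *\<^sub>v b) $ k = row (rows X S) k \<bullet> b" using R k by simp
  also have "\<dots> = row X (pick S k) \<bullet> b" by (simp only: rw)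
  also have "\<dots> = (X *\<^sub>v b) $ pick S k"
    by (rule index_mult_mat_vec[symmetric]) (use X pk in simp)
  also have "\<dots> = subvec (X *\<^sub>v b) S $ k" by (rule subvec_index[OF S' k, symmetric])
  finally show "(rows X S *\<^sub>v b) $ k = subvec (X *\<^sub>v b) S $ k" .
qed


lemma norm2_smult: "norm2 (c \<cdot>\<^sub>v v) = \<bar>c\<bar> * norm2 v"
proof -
  have "norm2 (c \<cdot>\<^sub>v v) = L2_set (\<lambda>i. \<bar>c\<bar> * v $ i) {..<dim_vec v}"
    unfolding norm2_L2 L2_set_def by (simp add: power_mult_distrib)
  also have "\<dots> = \<bar>c\<bar> * norm2 v" unfolding norm2_L2 by (simp add: L2_set_right_distrib)
  finally show ?thesis .
qed

lemma L2_abs: "L2_set (\<lambda>i. \<bar>f i\<bar>) A = L2_set f A"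
  unfolding L2_set_def by simp

lemma mat_bound: assumes A: "A \<in> carrier_mat m d"
  shows "\<exists>K>0. \<forall>v\<in>carrier_vec d. norm2 (A *\<^sub>v v) \<le> K * norm2 v"
proof -
  define K where "K = L2_set (\<lambda>i. norm2 (row A i)) {..<m} + 1"
  have K0: "K > 0" unfolding K_def by (simp add: add_nonneg_pos)
  have "norm2 (A *\<^sub>v v) \<le> K * norm2 v" if v: "v \<in> carrier_vec d" for v
  proof -
    have "norm2 (A *\<^sub>v v) = L2_set (\<lambda>i. \<bar>(A *\<^sub>v v) $ i\<bar>) {..<m}"
      unfolding norm2_L2 L2_abs using A by simp
    also have "\<dots> \<le> L2_set (\<lambda>i. norm2 (row A i) * norm2 v) {..<m}"
    proof (rule L2_set_mono)
      fix i assume "i \<in> {..<m}"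
      then have i: "i < m" by simp
      have "\<bar>(A *\<^sub>v v) $ i\<bar> = \<bar>row A i \<bullet> v\<bar>" using A i by simp
      also have "\<dots> \<le> norm2 (row A i) * norm2 v"
        by (rule cauchy_schwarz) (use A v in simp)
      finally show "\<bar>(A *\<^sub>v v) $ i\<bar> \<le> norm2 (row A i) * norm2 v" .
    qed simp
    also have "\<dots> = L2_set (\<lambda>i. norm2 (row A i)) {..<m} * norm2 v"
      by (simp add: L2_set_left_distrib)
    also have "\<dots> \<le> K * norm2 v" unfolding K_def
      by (rule mult_right_mono) simp_all
    finally show ?thesis .
  qed
  with K0 show ?thesis by blast
qed

lemma spec_norm: assumes A: "A \<in> carrier_mat m d" and v: "v \<in> carrier_vec d"
  shows "norm2 (A *\<^sub>v v) \<le> spec_norm A * norm2 v" and "0 \<le> spec_norm A"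
proof -
  define T where "T = {norm2 (A *\<^sub>v v) | v. v \<in> carrier_vec (dim_col A) \<and> norm2 v \<le> 1}"
  obtain K where K: "K > 0" "\<forall>v\<in>carrier_vec d. norm2 (A *\<^sub>v v) \<le> K * norm2 v"
    using mat_bound[OF A] by blast
  have dc: "dim_col A = d" using A by simp
  have bdd: "bdd_above T" unfolding T_def bdd_above_def
  proof (rule exI[of _ K], intro ballI)
    fix x assume "x \<in> {norm2 (A *\<^sub>v v) |v. v \<in> carrier_vec (dim_col A) \<and> norm2 v \<le> 1}"
    then obtain w where w: "w \<in> carrier_vec d" "norm2 w \<le> 1" "x = norm2 (A *\<^sub>v w)" using dc by auto
    have "x \<le> K * norm2 w" using K w by simp
    also have "\<dots> \<le> K * 1" using K w by (intro mult_left_mono) simp_all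
    finally show "x \<le> K" by simp
  qed
  have z: "0\<^sub>v d \<in> carrier_vec d" by simp
  have n0: "\<And>k. norm2 (0\<^sub>v k) = 0" unfolding norm2_def by simp
  have Az: "A *\<^sub>v 0\<^sub>v d = 0\<^sub>v m" using A by (intro eq_vecI) auto
  have "0 \<in> T" unfolding T_def using z n0 Az dc by (auto intro!: exI[of _ "0\<^sub>v d"])
  then have s0: "0 \<le> Sup T" using bdd by (rule cSup_upper)
  then show "0 \<le> spec_norm A" unfolding spec_norm_def T_def .
  show "norm2 (A *\<^sub>v v) \<le> spec_norm A * norm2 v"
  proof (cases "norm2 v = 0")
    case True
    then show ?thesis using K v by (metis mult_zero_right)
  next
    case False
    define nv where "nv = norm2 v"
    have nv: "nv > 0" using False norm2_nonneg[of v] unfolding nv_def by linarith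
    define u where "u = (1 / nv) \<cdot>\<^sub>v v"
    have u: "u \<in> carrier_vec d" unfolding u_def using v by simp
    have nu: "norm2 u = 1" unfolding u_def norm2_smult nv_def using nv nv_def by simp
    have Au: "A *\<^sub>v u = (1 / nv) \<cdot>\<^sub>v (A *\<^sub>v v)" unfolding u_def by (rule mult_mat_vec[OF A v])
    have "norm2 (A *\<^sub>v u) \<in> T" unfolding T_def using u nu dc by auto
    then have "norm2 (A *\<^sub>v u) \<le> Sup T" using bdd by (rule cSup_upper)
    then have "norm2 (A *\<^sub>v v) / nv \<le> spec_norm A"
      unfolding Au norm2_smult spec_norm_def T_def using nv by simp
    then show ?thesis using nv unfolding nv_def by (simp add: pos_divide_le_eq mult.commute)
  qed
qed


lemma quadform: assumes A: "A \<in> carrier_mat m d" and z: "z \<in> carrier_vec d"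
  shows "((transpose_mat A * A) *\<^sub>v z) \<bullet> z = (norm2 (A *\<^sub>v z))^2"
proof -
  have At: "transpose_mat A \<in> carrier_mat d m" using A by simp
  have Az: "A *\<^sub>v z \<in> carrier_vec m" using A z by simp
  have "(transpose_mat A * A) *\<^sub>v z = transpose_mat A *\<^sub>v (A *\<^sub>v z)"
    by (rule assoc_mult_mat_vec[OF At A z])
  then have "((transpose_mat A * A) *\<^sub>v z) \<bullet> z = (A *\<^sub>v z) \<bullet> (A *\<^sub>v z)"
    using transpose_vec_mult_scalar[OF A z Az] by simp
  then show ?thesis by (simp add: norm2_sq)
qed

lemma real_quad: fixes a b c :: real
  assumes c: "c \<ge> 0" and H: "\<And>t. 0 \<le> a + 2*t*b + t^2*c"
  shows "b^2 \<le> a*c"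
proof (cases "c = 0")
  case True
  show ?thesis
  proof (rule ccontr)
    assume "\<not> ?thesis"
    then have b: "b \<noteq> 0" using True by auto
    have "0 \<le> a + 2*(-(a+1)/(2*b))*b + (-(a+1)/(2*b))^2*c" by (rule H)
    also have "\<dots> = -1" using b True by (simp add: field_simps)
    finally show False by simp
  qed
next
  case False
  then have cp: "c > 0" using c by simp
  have "0 \<le> a + 2*(-b/c)*b + (-b/c)^2*c" by (rule H)
  also have "\<dots> = a - b^2/c" using cp by (simp add: field_simps power2_eq_square)
  finally have "b^2/c \<le> a" by simp
  then show ?thesis using cp by (simp add: divide_le_eq mult.commute)
qed

lemma psd_cs: fixes B :: "real mat"
  assumes B: "B \<in> carrier_mat d d" and sym: "transpose_mat B = B"
    and psd: "\<And>x. x \<in> carrier_vec d \<Longrightarrow> 0 \<le> x \<bullet> (B *\<^sub>v x)"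
    and u: "u \<in> carrier_vec d" and z: "z \<in> carrier_vec d"
  shows "(u \<bullet> (B *\<^sub>v z))^2 \<le> (u \<bullet> (B *\<^sub>v u)) * (z \<bullet> (B *\<^sub>v z))"
proof (rule real_quad)
  show "0 \<le> z \<bullet> (B *\<^sub>v z)" by (rule psd[OF z])
  have Bu: "B *\<^sub>v u \<in> carrier_vec d" and Bz: "B *\<^sub>v z \<in> carrier_vec d" using B u z by auto
  have symm: "z \<bullet> (B *\<^sub>v u) = u \<bullet> (B *\<^sub>v z)"
  proof -
    have "(transpose_mat B *\<^sub>v z) \<bullet> u = z \<bullet> (B *\<^sub>v u)" by (rule transpose_vec_mult_scalar[OF B u z])
    then have "(B *\<^sub>v z) \<bullet> u = z \<bullet> (B *\<^sub>v u)" using sym by simp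
    then show ?thesis using comm_scalar_prod[OF Bz u] by simp
  qed
  fix t :: real
  have w: "u + t \<cdot>\<^sub>v z \<in> carrier_vec d" using u z by simp
  have Bw: "B *\<^sub>v (u + t \<cdot>\<^sub>v z) = B *\<^sub>v u + t \<cdot>\<^sub>v (B *\<^sub>v z)"
    using mult_add_distrib_mat_vec[OF B u, of "t \<cdot>\<^sub>v z"] mult_mat_vec[OF B z] z by simp
  have "(u + t \<cdot>\<^sub>v z) \<bullet> (B *\<^sub>v (u + t \<cdot>\<^sub>v z))
      = u \<bullet> (B *\<^sub>v u) + t * (u \<bullet> (B *\<^sub>v z)) + t * (z \<bullet> (B *\<^sub>v u)) + t * t * (z \<bullet> (B *\<^sub>v z))"
    unfolding Bw using u z Bu Bz
    by (simp add: add_scalar_prod_distrib[of _ d] scalar_prod_add_distrib[of _ d] algebra_simps)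
  also have "\<dots> = u \<bullet> (B *\<^sub>v u) + 2 * t * (u \<bullet> (B *\<^sub>v z)) + t^2 * (z \<bullet> (B *\<^sub>v z))"
    unfolding symm by (simp add: power2_eq_square)
  finally show "0 \<le> u \<bullet> (B *\<^sub>v u) + 2 * t * (u \<bullet> (B *\<^sub>v z)) + t^2 * (z \<bullet> (B *\<^sub>v z))"
    using psd[OF w] by simp
qed


lemma norm2_carrier0: "z \<in> carrier_vec 0 \<Longrightarrow> norm2 z = 0"
  unfolding norm2_L2 by simp

lemma norm2_unit: "i < d \<Longrightarrow> norm2 (unit_vec d i) = 1"
  unfolding norm2_def by simp

lemma eig_finite: assumes M: "(M :: real mat) \<in> carrier_mat d d"
  shows "finite {k. eigenvalue M k}"
proof -
  have "char_poly M \<noteq> 0" using degree_monic_char_poly[OF M] by auto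
  then have "finite {k. poly (char_poly M) k = 0}" by (rule poly_roots_finite)
  then show ?thesis using eigenvalue_root_char_poly[OF M] by simp
qed

lemma smult_one_mult: assumes v: "(v :: real vec) \<in> carrier_vec d"
  shows "(c \<cdot>\<^sub>m 1\<^sub>m d) *\<^sub>v v = c \<cdot>\<^sub>v v"
  using v by (intro eq_vecI) auto


lemma rayleigh: assumes A: "(A :: real mat) \<in> carrier_mat m d" and z: "z \<in> carrier_vec d"
  shows "lambda_min (transpose_mat A * A) * (norm2 z)^2 \<le> (norm2 (A *\<^sub>v z))^2"
proof (cases "d = 0")
  case True
  then show ?thesis using norm2_carrier0 z by simp
next
  case False
  define M where "M = transpose_mat A * A"
  have M: "M \<in> carrier_mat d d" unfolding M_def using A by simp
  define Q where "Q = {(norm2 (A *\<^sub>v z))^2 | z. z \<in> carrier_vec d \<and> norm2 z = 1}"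
  have Qne: "Q \<noteq> {}" unfolding Q_def using norm2_unit[of 0 d] False
    by (auto intro!: exI[of _ "unit_vec d 0"])
  have Qlb: "\<And>q. q \<in> Q \<Longrightarrow> 0 \<le> q" unfolding Q_def by auto
  have bddQ: "bdd_below Q" unfolding bdd_below_def using Qlb by blast
  define \<mu> where "\<mu> = Inf Q"
  have H1: "\<mu> * (norm2 x)^2 \<le> (norm2 (A *\<^sub>v x))^2" if x: "x \<in> carrier_vec d" for x
  proof (cases "norm2 x = 0")
    case True
    then show ?thesis by simp
  next
    case False
    define nx where "nx = norm2 x"
    have nx: "nx > 0" using False norm2_nonneg[of x] unfolding nx_def by linarith
    define u where "u = (1 / nx) \<cdot>\<^sub>v x"
    have u: "u \<in> carrier_vec d" unfolding u_def using x by simp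
    have nu: "norm2 u = 1" unfolding u_def norm2_smult nx_def using nx nx_def by simp
    have Au: "A *\<^sub>v u = (1 / nx) \<cdot>\<^sub>v (A *\<^sub>v x)" unfolding u_def by (rule mult_mat_vec[OF A x])
    have "(norm2 (A *\<^sub>v u))^2 \<in> Q" unfolding Q_def using u nu by auto
    then have "\<mu> \<le> (norm2 (A *\<^sub>v u))^2" unfolding \<mu>_def using bddQ by (rule cInf_lower)
    also have "\<dots> = (norm2 (A *\<^sub>v x))^2 / nx^2" unfolding Au norm2_smult using nx
      by (simp add: power_divide)
    finally have "\<mu> \<le> (norm2 (A *\<^sub>v x))^2 / nx^2" .
    then show ?thesis using nx unfolding nx_def by (simp add: le_divide_eq)
  qed
  have Msym: "transpose_mat M = M" unfolding M_def using A by (simp add: transpose_mult[of _ d m])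
  have H2: "eigenvalue M \<mu>"
  proof (rule ccontr)
    assume ne: "\<not> eigenvalue M \<mu>"
    define B where "B = M - \<mu> \<cdot>\<^sub>m 1\<^sub>m d"
    have B: "B \<in> carrier_mat d d" unfolding B_def by (rule minus_carrier_mat) simp
    have Bv: "B *\<^sub>v v = M *\<^sub>v v - \<mu> \<cdot>\<^sub>v v" if v: "v \<in> carrier_vec d" for v
      unfolding B_def using minus_mult_distrib_mat_vec[OF M _ v, of "\<mu> \<cdot>\<^sub>m 1\<^sub>m d"] smult_one_mult[OF v]
      by simp
    have Bsym: "transpose_mat B = B"
    proof (rule eq_matI)
      fix i j assume i: "i < dim_row B" and j: "j < dim_col B"
      have "M $$ (j, i) = M $$ (i, j)" using arg_cong[OF Msym, of "\<lambda>X. X $$ (i,j)"] i j M B by simp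
      then show "transpose_mat B $$ (i, j) = B $$ (i, j)" using i j B M unfolding B_def by auto
    qed (use B in auto)
    have psd: "0 \<le> x \<bullet> (B *\<^sub>v x)" if x: "x \<in> carrier_vec d" for x
    proof -
      have Mx: "M *\<^sub>v x \<in> carrier_vec d" using M x by simp
      have "x \<bullet> (B *\<^sub>v x) = x \<bullet> (M *\<^sub>v x) - \<mu> * (x \<bullet> x)"
        unfolding Bv[OF x] using x Mx by (simp add: scalar_prod_minus_distrib[of _ d])
      also have "x \<bullet> (M *\<^sub>v x) = (norm2 (A *\<^sub>v x))^2"
        using quadform[OF A x] comm_scalar_prod[OF Mx x] unfolding M_def by simp
      finally show ?thesis using H1[OF x] by (simp add: norm2_sq)
    qed
    have detB: "det B \<noteq> 0"
    proof
      assume "det B = 0"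
      then obtain v where v: "v \<in> carrier_vec d" "v \<noteq> 0\<^sub>v d" "B *\<^sub>v v = 0\<^sub>v d"
        using det_0_iff_vec_prod_zero[OF B] by blast
      have "M *\<^sub>v v = \<mu> \<cdot>\<^sub>v v"
      proof (rule eq_vecI)
        fix i assume "i < dim_vec (\<mu> \<cdot>\<^sub>v v)"
        then have i: "i < d" using v by simp
        have "(B *\<^sub>v v) $ i = 0" using v i by simp
        then show "(M *\<^sub>v v) $ i = (\<mu> \<cdot>\<^sub>v v) $ i" unfolding Bv[OF v(1)] using i v M by simp
      qed (use v M in simp)
      then have "eigenvector M v \<mu>" unfolding eigenvector_def using v M by simp
      then show False using ne unfolding eigenvalue_def by blast
    qed
    have "B \<in> Units (ring_mat TYPE(real) d ())" by (rule det_non_zero_imp_unit[OF B detB])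
    then obtain C where C: "C \<in> carrier_mat d d" "C * B = 1\<^sub>m d"
      unfolding Units_def ring_mat_def by auto
    obtain KC where KC: "KC > 0" "\<forall>v\<in>carrier_vec d. norm2 (C *\<^sub>v v) \<le> KC * norm2 v"
      using mat_bound[OF C(1)] by blast
    obtain KB where KB: "KB > 0" "\<forall>v\<in>carrier_vec d. norm2 (B *\<^sub>v v) \<le> KB * norm2 v"
      using mat_bound[OF B] by blast
    define \<delta> where "\<delta> = 1 / (KC^2 * KB)"
    have \<delta>: "\<delta> > 0" unfolding \<delta>_def using KC KB by simp
    have key: "\<mu> + \<delta> \<le> q" if q: "q \<in> Q" for q
    proof -
      obtain z where z: "z \<in> carrier_vec d" "norm2 z = 1" "q = (norm2 (A *\<^sub>v z))^2"
        using q unfolding Q_def by blast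
      define u where "u = B *\<^sub>v z"
      have u: "u \<in> carrier_vec d" unfolding u_def using B z by simp
      have "z = C *\<^sub>v u" unfolding u_def using assoc_mult_mat_vec[OF C(1) B z(1)] C(2) z by simp
      then have "1 \<le> KC * norm2 u" using KC z u by metis
      then have nu: "1 / KC \<le> norm2 u" using KC by (simp add: divide_le_eq mult.commute)
      have nu0: "norm2 u > 0" using nu KC by (smt (verit) divide_pos_pos)
      define qz where "qz = z \<bullet> (B *\<^sub>v z)"
      have "(u \<bullet> (B *\<^sub>v z))^2 \<le> (u \<bullet> (B *\<^sub>v u)) * qz"
        unfolding qz_def by (rule psd_cs[OF B Bsym psd u z(1)])
      moreover have "u \<bullet> (B *\<^sub>v z) = (norm2 u)^2" unfolding u_def by (simp add: norm2_sq)
      moreover have "u \<bullet> (B *\<^sub>v u) \<le> KB * (norm2 u)^2"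
      proof -
        have "u \<bullet> (B *\<^sub>v u) \<le> \<bar>u \<bullet> (B *\<^sub>v u)\<bar>" by simp
        also have "\<dots> \<le> norm2 u * norm2 (B *\<^sub>v u)" by (rule cauchy_schwarz) (use u B in simp)
        also have "\<dots> \<le> norm2 u * (KB * norm2 u)" using KB u by (intro mult_left_mono) simp_all
        finally show ?thesis by (simp add: power2_eq_square mult.commute mult.left_commute)
      qed
      moreover have "qz \<ge> 0" unfolding qz_def by (rule psd[OF z(1)])
      ultimately have "(norm2 u)^2 * (norm2 u)^2 \<le> (KB * (norm2 u)^2) * qz"
        by (smt (verit, best) mult_right_mono power2_eq_square)
      then have "(norm2 u)^2 \<le> KB * qz" using nu0 by (simp add: power2_eq_square mult.assoc)
      moreover have "(1/KC)^2 \<le> (norm2 u)^2" using nu KC by (intro power_mono) simp_all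
      ultimately have "1 / KC^2 \<le> KB * qz" by (simp add: power_divide)
      then have dq: "\<delta> \<le> qz" unfolding \<delta>_def using KB KC
        by (simp add: divide_le_eq field_simps)
      have "qz = z \<bullet> (M *\<^sub>v z) - \<mu> * (z \<bullet> z)"
        unfolding qz_def Bv[OF z(1)] using z M by (simp add: scalar_prod_minus_distrib[of _ d])
      also have "z \<bullet> (M *\<^sub>v z) = q"
        using quadform[OF A z(1)] comm_scalar_prod[of "M *\<^sub>v z" d z] M z unfolding M_def by simp
      also have "z \<bullet> z = 1" using z norm2_sq[of z] by simp
      finally show ?thesis using dq by simp
    qed
    have "\<mu> + \<delta> \<le> Inf Q" using Qne key by (rule cInf_greatest)
    then show False using \<delta> unfolding \<mu>_def by simp
  qed
  have "lambda_min M \<le> \<mu>" unfolding lambda_min_def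
    using Min_le[OF eig_finite[OF M]] H2 by simp
  then have "lambda_min M * (norm2 z)^2 \<le> \<mu> * (norm2 z)^2" by (intro mult_right_mono) simp_all
  also have "\<dots> \<le> (norm2 (A *\<^sub>v z))^2" by (rule H1[OF z])
  finally show ?thesis unfolding M_def .
qed


lemma norm2_eq0: assumes "v \<in> carrier_vec d" "norm2 v = 0" shows "v = 0\<^sub>v d"
proof (rule eq_vecI)
  have "\<forall>i\<in>{..<dim_vec v}. v $ i = 0" using assms(2) unfolding norm2_L2
    by (subst (asm) L2_set_eq_0_iff) auto
  then show "\<And>i. i < dim_vec (0\<^sub>v d) \<Longrightarrow> v $ i = 0\<^sub>v d $ i" using assms(1) by auto
qed (use assms in auto)

lemma inv_exists: assumes M: "(M :: real mat) \<in> carrier_mat d d"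
  and inj: "\<And>z. z \<in> carrier_vec d \<Longrightarrow> M *\<^sub>v z = 0\<^sub>v d \<Longrightarrow> z = 0\<^sub>v d"
  shows "\<exists>Mi. Mi \<in> carrier_mat d d \<and> M * Mi = 1\<^sub>m d \<and> Mi * M = 1\<^sub>m d"
proof -
  have "det M \<noteq> 0" using det_0_iff_vec_prod_zero[OF M] inj by blast
  then have "M \<in> Units (ring_mat TYPE(real) d ())" by (rule det_non_zero_imp_unit[OF M])
  then show ?thesis unfolding Units_def ring_mat_def by auto
qed

lemma inv_unique: assumes M: "(M :: real mat) \<in> carrier_mat d d" and Mi: "Mi \<in> carrier_mat d d"
  and l: "Mi * M = 1\<^sub>m d" and B: "B \<in> carrier_mat d d" and r: "M * B = 1\<^sub>m d"
  shows "B = Mi"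
proof -
  have "B = (Mi * M) * B" using l B by simp
  also have "\<dots> = Mi * (M * B)" using Mi M B by simp
  also have "\<dots> = Mi" using r Mi by simp
  finally show ?thesis .
qed

lemma pinv_inv: assumes M: "(M :: real mat) \<in> carrier_mat d d" and Mi: "Mi \<in> carrier_mat d d"
  and r: "M * Mi = 1\<^sub>m d" and l: "Mi * M = 1\<^sub>m d"
  shows "pinv M = Mi"
  unfolding pinv_def
proof (rule the_equality)
  show "Mi \<in> carrier_mat (dim_col M) (dim_row M) \<and> M * Mi * M = M \<and> Mi * M * Mi = Mi
     \<and> transpose_mat (M * Mi) = M * Mi \<and> transpose_mat (Mi * M) = Mi * M"
    using M Mi r l by simp
  fix B assume H: "B \<in> carrier_mat (dim_col M) (dim_row M) \<and> M * B * M = M \<and> B * M * B = B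
     \<and> transpose_mat (M * B) = M * B \<and> transpose_mat (B * M) = B * M"
  then have B: "B \<in> carrier_mat d d" and MBM: "M * B * M = M" using M by auto
  have "M * B = M * B * (M * Mi)" using r M B by simp
  also have "\<dots> = (M * B * M) * Mi"
    using M B Mi assoc_mult_mat[of "M * B" d d M d Mi d] by simp
  also have "\<dots> = 1\<^sub>m d" using MBM r by simp
  finally show "B = Mi" using inv_unique[OF M Mi l B] by simp
qed

lemma minv_inv: assumes M: "(M :: real mat) \<in> carrier_mat d d" and Mi: "Mi \<in> carrier_mat d d"
  and r: "M * Mi = 1\<^sub>m d" and l: "Mi * M = 1\<^sub>m d"
  shows "minv M = Mi"
  unfolding minv_def
proof (rule the_equality)
  show "inverts_mat M Mi \<and> inverts_mat Mi M" unfolding inverts_mat_def using M Mi r l by simp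
  fix B assume "inverts_mat M B \<and> inverts_mat B M"
  then have MB: "M * B = 1\<^sub>m d" and BM: "B * M = 1\<^sub>m (dim_row B)" unfolding inverts_mat_def using M by auto
  have "dim_col B = d" using arg_cong[OF MB, of dim_col] by simp
  moreover have "dim_row B = d" using arg_cong[OF BM, of dim_col] M by simp
  ultimately have B: "B \<in> carrier_mat d d" by auto
  show "B = Mi" by (rule inv_unique[OF M Mi l B MB])
qed


lemma tsum: assumes X: "X \<in> carrier_mat n d" and S: "S \<subseteq> {..<n}"
  and u: "u \<in> carrier_vec n" and c: "c \<in> carrier_vec d"
  shows "(transpose_mat (rows X S) *\<^sub>v subvec u S) \<bullet> c = (\<Sum>i\<in>S. u $ i * (X *\<^sub>v c) $ i)"
proof -
  have R: "rows X S \<in> carrier_mat (card S) d" by (rule rows_dim[OF X S])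
  have Su: "S \<subseteq> {..<dim_vec u}" using S u by simp
  have us: "subvec u S \<in> carrier_vec (card S)" by (rule carrier_vecI[OF dim_subvec[OF Su]])
  have "(transpose_mat (rows X S) *\<^sub>v subvec u S) \<bullet> c = subvec u S \<bullet> (rows X S *\<^sub>v c)"
    by (rule transpose_vec_mult_scalar[OF R c us])
  also have "\<dots> = subvec u S \<bullet> subvec (X *\<^sub>v c) S" by (simp only: rows_mult[OF X S c])
  also have "\<dots> = (\<Sum>i\<in>S. u $ i * (X *\<^sub>v c) $ i)" by (rule subvec_sprod[OF Su]) (use X u in simp)
  finally show ?thesis .
qed

lemma solve: assumes X: "X \<in> carrier_mat n d" and S: "S \<subseteq> {..<n}"
  and Mi: "Mi \<in> carrier_mat d d" and r: "(transpose_mat (rows X S) * rows X S) * Mi = 1\<^sub>m d"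
  and q: "q \<in> carrier_vec n"
  and v: "v = Mi *\<^sub>v (transpose_mat (rows X S) *\<^sub>v subvec q S)"
  shows "v \<in> carrier_vec d" and "\<And>c. (c::real vec) \<in> carrier_vec d \<Longrightarrow>
     (\<Sum>i\<in>S. (X *\<^sub>v v) $ i * (X *\<^sub>v c) $ i) = (\<Sum>i\<in>S. q $ i * (X *\<^sub>v c) $ i)"
proof -
  define A where "A = rows X S"
  have A: "A \<in> carrier_mat (card S) d" unfolding A_def by (rule rows_dim[OF X S])
  have At: "transpose_mat A \<in> carrier_mat d (card S)" using A by simp
  have Sq: "S \<subseteq> {..<dim_vec q}" using S q by simp
  have qs: "subvec q S \<in> carrier_vec (card S)" by (rule carrier_vecI[OF dim_subvec[OF Sq]])
  define g where "g = transpose_mat A *\<^sub>v subvec q S"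
  have g: "g \<in> carrier_vec d" unfolding g_def by (rule mult_mat_vec_carrier[OF At qs])
  have vg: "v = Mi *\<^sub>v g" unfolding v g_def A_def ..
  show vc: "v \<in> carrier_vec d" unfolding vg by (rule mult_mat_vec_carrier[OF Mi g])
  have AtA: "transpose_mat A * A \<in> carrier_mat d d" using A by simp
  have "(transpose_mat A * A) *\<^sub>v v = (transpose_mat A * A) *\<^sub>v (Mi *\<^sub>v g)" by (simp only: vg)
  also have "\<dots> = ((transpose_mat A * A) * Mi) *\<^sub>v g" by (rule assoc_mult_mat_vec[OF AtA Mi g, symmetric])
  also have "\<dots> = g" using r g unfolding A_def by simp
  finally have eq1: "(transpose_mat A * A) *\<^sub>v v = g" .
  have Av: "A *\<^sub>v v = subvec (X *\<^sub>v v) S" unfolding A_def by (rule rows_mult[OF X S vc])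
  have "transpose_mat A *\<^sub>v subvec (X *\<^sub>v v) S = transpose_mat A *\<^sub>v (A *\<^sub>v v)" by (simp only: Av)
  also have "\<dots> = (transpose_mat A * A) *\<^sub>v v" by (rule assoc_mult_mat_vec[OF At A vc, symmetric])
  also have "\<dots> = g" by (rule eq1)
  finally have eq2: "transpose_mat A *\<^sub>v subvec (X *\<^sub>v v) S = transpose_mat A *\<^sub>v subvec q S"
    unfolding g_def .
  fix c :: "real vec" assume c: "c \<in> carrier_vec d"
  have Xv: "X *\<^sub>v v \<in> carrier_vec n" using X vc by simp
  have "(\<Sum>i\<in>S. (X *\<^sub>v v) $ i * (X *\<^sub>v c) $ i) = (transpose_mat A *\<^sub>v subvec (X *\<^sub>v v) S) \<bullet> c"
    unfolding A_def by (rule tsum[OF X S Xv c, symmetric])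
  also have "\<dots> = (transpose_mat A *\<^sub>v subvec q S) \<bullet> c" using eq2 by simp
  also have "\<dots> = (\<Sum>i\<in>S. q $ i * (X *\<^sub>v c) $ i)" unfolding A_def by (rule tsum[OF X S q c])
  finally show "(\<Sum>i\<in>S. (X *\<^sub>v v) $ i * (X *\<^sub>v c) $ i) = (\<Sum>i\<in>S. q $ i * (X *\<^sub>v c) $ i)" .
qed

lemma sum_sq_le: fixes f :: "nat \<Rightarrow> real"
  assumes B: "finite B" and card: "card A \<le> card B"
    and le: "\<And>i j. i \<in> A \<Longrightarrow> j \<in> B \<Longrightarrow> \<bar>f i\<bar> \<le> \<bar>f j\<bar>"
  shows "(\<Sum>i\<in>A. (f i)^2) \<le> (\<Sum>j\<in>B. (f j)^2)"
proof (cases "A = {} \<or> infinite A")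
  case True
  then show ?thesis by (auto intro!: sum_nonneg)
next
  case False
  then have An: "A \<noteq> {}" and Af: "finite A" by auto
  then have "card A > 0" by (simp add: card_gt_0_iff)
  then have Bn: "B \<noteq> {}" using card by auto
  define m where "m = Min ((\<lambda>j. (f j)^2) ` B)"
  have m0: "0 \<le> m" unfolding m_def using B Bn by simp
  have mB: "m \<le> (f j)^2" if "j \<in> B" for j unfolding m_def using B that by simp
  have Am: "(f i)^2 \<le> m" if i: "i \<in> A" for i
  proof -
    have "m \<in> (\<lambda>j. (f j)^2) ` B" unfolding m_def using B Bn by simp
    then obtain j where j: "j \<in> B" "m = (f j)^2" by auto
    have "\<bar>f i\<bar> \<le> \<bar>f j\<bar>" by (rule le[OF i j(1)])
    then have "\<bar>f i\<bar>^2 \<le> \<bar>f j\<bar>^2" by (intro power_mono) simp_all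
    then show ?thesis using j by simp
  qed
  have "(\<Sum>i\<in>A. (f i)^2) \<le> (\<Sum>i\<in>A. m)" using Am by (rule sum_mono)
  also have "\<dots> = card A * m" by simp
  also have "\<dots> \<le> card B * m" using card m0 by (intro mult_right_mono) simp_all
  also have "\<dots> = (\<Sum>j\<in>B. m)" by simp
  also have "\<dots> \<le> (\<Sum>j\<in>B. (f j)^2)" using mB by (rule sum_mono)
  finally show ?thesis .
qed

lemma L2_pick: assumes "finite S"
  shows "L2_set (\<lambda>k. g (pick S k)) {..<card S} = L2_set g S"
  unfolding L2_set_def using sum_pick[OF assms, of "\<lambda>i. (g i)^2"] by simp

lemma err_L2: assumes X: "X \<in> carrier_mat n d" and S: "S \<subseteq> {..<n}" and Y: "Y \<in> carrier_vec n"
  and b: "b \<in> carrier_vec d"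
  shows "norm2 (map_vec abs (subvec Y S - rows X S *\<^sub>v b)) = L2_set (\<lambda>i. Y $ i - (X *\<^sub>v b) $ i) S"
proof -
  have fin: "finite S" using S finite_subset by blast
  have SY: "S \<subseteq> {..<dim_vec Y}" using S Y by simp
  have SX: "S \<subseteq> {..<dim_vec (X *\<^sub>v b)}" using S X by simp
  define v where "v = subvec Y S - subvec (X *\<^sub>v b) S"
  have dv: "dim_vec v = card S" unfolding v_def using dim_subvec[OF SY] dim_subvec[OF SX] by simp
  have vi: "v $ k = Y $ pick S k - (X *\<^sub>v b) $ pick S k" if k: "k < card S" for k
    unfolding v_def using k dim_subvec[OF SX] subvec_index[OF SY k] subvec_index[OF SX k] by simp
  have "norm2 (map_vec abs (subvec Y S - rows X S *\<^sub>v b)) = norm2 (map_vec abs v)"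
    unfolding v_def rows_mult[OF X S b] ..
  also have "\<dots> = L2_set (\<lambda>k. \<bar>v $ k\<bar>) {..<card S}" unfolding norm2_L2
    by (rule L2_set_cong) (simp_all add: dv)
  also have "\<dots> = L2_set (\<lambda>k. v $ k) {..<card S}" by (rule L2_abs)
  also have "\<dots> = L2_set (\<lambda>k. Y $ pick S k - (X *\<^sub>v b) $ pick S k) {..<card S}"
    by (rule L2_set_cong) (simp_all add: vi)
  also have "\<dots> = L2_set (\<lambda>i. Y $ i - (X *\<^sub>v b) $ i) S" by (rule L2_pick[OF fin])
  finally show ?thesis .
qed


lemma rows_norm: assumes X: "X \<in> carrier_mat n d" and S: "S \<subseteq> {..<n}" and z: "z \<in> carrier_vec d"
  shows "norm2 (rows X S *\<^sub>v z) = L2_set (\<lambda>i. (X *\<^sub>v z) $ i) S"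
proof -
  have S': "S \<subseteq> {..<dim_vec (X *\<^sub>v z)}" using X S by simp
  show ?thesis unfolding rows_mult[OF X S z] by (rule norm2_subvec[OF S'])
qed

lemma L2_sq: "(L2_set f A)^2 = (\<Sum>i\<in>A. (f i)^2)"
  unfolding L2_set_def by (simp add: sum_nonneg)

lemma Xdiff: assumes X: "(X :: real mat) \<in> carrier_mat n d" and b: "b \<in> carrier_vec d" and b': "b' \<in> carrier_vec d"
  and i: "i < n"
  shows "(X *\<^sub>v (b - b')) $ i = (X *\<^sub>v b) $ i - (X *\<^sub>v b') $ i"
  using mult_minus_distrib_mat_vec[OF X b b'] X i by simp

locale tor_setting =
  fixes n d c :: nat and X :: "real mat" and \<beta> \<epsilon> out Y :: "real vec" and G :: "nat set"
    and ht :: "(nat \<Rightarrow> real) \<Rightarrow> nat \<Rightarrow> nat set"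
  assumes dn: "d \<le> n"
    and X: "X \<in> carrier_mat n d" and \<beta>: "\<beta> \<in> carrier_vec d"
    and \<epsilon>: "\<epsilon> \<in> carrier_vec n" and out: "out \<in> carrier_vec n"
    and G: "G \<subseteq> {..<n}" and outG: "\<forall>i<n. i \<notin> G \<longrightarrow> out $ i = 0"
    and Ydef: "Y = X *\<^sub>v \<beta> + \<epsilon> + out"
    and cG: "card G \<le> c"
    and HT: "is_HT n ht"
    and lam: "\<forall>S. S \<subseteq> {..<n} \<and> card S = n - c \<longrightarrow>
           lambda_min (transpose_mat (rows X S) * rows X S) > 0"
    and eta: "eta X n G (n - c) < 1 / sqrt 2"
begin

abbreviation "a \<equiv> n - c"

lemma Y: "Y \<in> carrier_vec n" unfolding Ydef using X \<beta> \<epsilon> out by simp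

lemma dimY: "dim_vec Y = n" using Y by simp

lemma Yi: "i < n \<Longrightarrow> Y $ i = (X *\<^sub>v \<beta>) $ i + \<epsilon> $ i + out $ i"
  unfolding Ydef using X \<beta> \<epsilon> out by simp

lemma res_i: "b \<in> carrier_vec d \<Longrightarrow> i < n \<Longrightarrow> (Y - X *\<^sub>v b) $ i = Y $ i - (X *\<^sub>v b) $ i"
  using X Y by simp

lemma inv_P: assumes P: "P \<subseteq> {..<n}" and S': "S' \<subseteq> P" "card S' = a"
  shows "\<exists>Mi. Mi \<in> carrier_mat d d \<and> (transpose_mat (rows X P) * rows X P) * Mi = 1\<^sub>m d
            \<and> Mi * (transpose_mat (rows X P) * rows X P) = 1\<^sub>m d"
proof (rule inv_exists)
  have RP: "rows X P \<in> carrier_mat (card P) d" by (rule rows_dim[OF X P])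
  show "transpose_mat (rows X P) * rows X P \<in> carrier_mat d d" using RP by simp
  fix z assume z: "z \<in> carrier_vec d" and Mz: "(transpose_mat (rows X P) * rows X P) *\<^sub>v z = 0\<^sub>v d"
  have "(norm2 (rows X P *\<^sub>v z))^2 = 0" using quadform[OF RP z] Mz z by simp
  then have sP: "(\<Sum>i\<in>P. ((X *\<^sub>v z) $ i)^2) = 0" unfolding rows_norm[OF X P z] L2_sq .
  have S'n: "S' \<subseteq> {..<n}" using S' P by auto
  have finP: "finite P" using P finite_subset by blast
  have "(\<Sum>i\<in>S'. ((X *\<^sub>v z) $ i)^2) \<le> (\<Sum>i\<in>P. ((X *\<^sub>v z) $ i)^2)"
    by (rule sum_mono2[OF finP S'(1)]) simp
  moreover have "0 \<le> (\<Sum>i\<in>S'. ((X *\<^sub>v z) $ i)^2)" by (simp add: sum_nonneg)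
  ultimately have "(\<Sum>i\<in>S'. ((X *\<^sub>v z) $ i)^2) = 0" using sP by simp
  then have n0: "(norm2 (rows X S' *\<^sub>v z))^2 = 0" unfolding rows_norm[OF X S'n z] L2_sq .
  have RS: "rows X S' \<in> carrier_mat (card S') d" by (rule rows_dim[OF X S'n])
  have lp: "lambda_min (transpose_mat (rows X S') * rows X S') > 0" using lam S'n S' by blast
  have "lambda_min (transpose_mat (rows X S') * rows X S') * (norm2 z)^2 \<le> 0"
    using rayleigh[OF RS z] n0 by simp
  then have "(norm2 z)^2 \<le> 0" using lp by (simp add: mult_le_0_iff)
  then have "norm2 z = 0" by simp
  then show "z = 0\<^sub>v d" by (rule norm2_eq0[OF z])
qed

lemma ols_P: assumes P: "P \<subseteq> {..<n}" and S': "S' \<subseteq> P" "card S' = a"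
  shows "ols X Y P \<in> carrier_vec d"
    and "\<And>cc. cc \<in> carrier_vec d \<Longrightarrow>
          (\<Sum>i\<in>P. (X *\<^sub>v ols X Y P) $ i * (X *\<^sub>v cc) $ i) = (\<Sum>i\<in>P. Y $ i * (X *\<^sub>v cc) $ i)"
proof -
  obtain Mi where Mi: "Mi \<in> carrier_mat d d" "(transpose_mat (rows X P) * rows X P) * Mi = 1\<^sub>m d"
    "Mi * (transpose_mat (rows X P) * rows X P) = 1\<^sub>m d" using inv_P[OF P S'] by blast
  have RP: "rows X P \<in> carrier_mat (card P) d" by (rule rows_dim[OF X P])
  have pi: "pinv (transpose_mat (rows X P) * rows X P) = Mi"
    by (rule pinv_inv[OF _ Mi]) (use RP in simp)
  have o: "ols X Y P = Mi *\<^sub>v (transpose_mat (rows X P) *\<^sub>v subvec Y P)"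
    unfolding ols_def pi ..
  show "ols X Y P \<in> carrier_vec d" by (rule solve(1)[OF X P Mi(1,2) Y o])
  show "\<And>cc. cc \<in> carrier_vec d \<Longrightarrow>
          (\<Sum>i\<in>P. (X *\<^sub>v ols X Y P) $ i * (X *\<^sub>v cc) $ i) = (\<Sum>i\<in>P. Y $ i * (X *\<^sub>v cc) $ i)"
    by (rule solve(2)[OF X P Mi(1,2) Y o])
qed

end


context tor_setting
begin

lemma pyth: assumes P: "P \<subseteq> {..<n}" and bh: "bh \<in> carrier_vec d" and b: "b \<in> carrier_vec d"
  and NE: "\<And>cc. cc \<in> carrier_vec d \<Longrightarrow>
          (\<Sum>i\<in>P. (X *\<^sub>v bh) $ i * (X *\<^sub>v cc) $ i) = (\<Sum>i\<in>P. Y $ i * (X *\<^sub>v cc) $ i)"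
  shows "(\<Sum>i\<in>P. (Y $ i - (X *\<^sub>v b) $ i)^2) =
         (\<Sum>i\<in>P. (Y $ i - (X *\<^sub>v bh) $ i)^2) + (\<Sum>i\<in>P. ((X *\<^sub>v (bh - b)) $ i)^2)"
proof -
  define e where "e i = (X *\<^sub>v (bh - b)) $ i" for i
  have cc: "bh - b \<in> carrier_vec d" using bh b by simp
  define r where "r i = Y $ i - (X *\<^sub>v bh) $ i" for i
  have "(\<Sum>i\<in>P. (Y $ i - (X *\<^sub>v b) $ i)^2) = (\<Sum>i\<in>P. (r i + e i)^2)"
  proof (rule sum.cong)
    fix i assume "i \<in> P"
    then have i: "i < n" using P by auto
    show "(Y $ i - (X *\<^sub>v b) $ i)^2 = (r i + e i)^2"
      unfolding r_def e_def Xdiff[OF X bh b i] by simp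
  qed simp
  also have "\<dots> = (\<Sum>i\<in>P. (r i)^2 + 2 * (r i * e i) + (e i)^2)"
    by (rule sum.cong) (simp_all add: power2_sum mult.assoc)
  also have "\<dots> = (\<Sum>i\<in>P. (r i)^2) + 2 * (\<Sum>i\<in>P. r i * e i) + (\<Sum>i\<in>P. (e i)^2)"
    by (simp add: sum.distrib sum_distrib_left)
  also have "(\<Sum>i\<in>P. r i * e i) = 0"
  proof -
    have "(\<Sum>i\<in>P. r i * e i) = (\<Sum>i\<in>P. Y $ i * e i) - (\<Sum>i\<in>P. (X *\<^sub>v bh) $ i * e i)"
      unfolding r_def by (simp add: left_diff_distrib sum_subtractf)
    then show ?thesis using NE[OF cc] unfolding e_def by simp
  qed
  finally show ?thesis unfolding e_def r_def by simp
qed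

lemma HTp: "a \<le> n \<Longrightarrow> ht v a \<subseteq> {..<n} \<and> card (ht v a) = a \<and>
      (\<forall>i \<in> ht v a. \<forall>j<n. j \<notin> ht v a \<longrightarrow> v i \<le> v j)"
  using HT unfolding is_HT_def by blast

lemma an: "a \<le> n" by simp

lemma S_sub: "tor_S ht X Y a t \<subseteq> {..<n}"
  by (cases t) (use HTp[OF an] dimY in auto)

lemma S_card: "card (tor_S ht X Y a (Suc t)) = a"
  using HTp[OF an] by simp

lemma S_HT: assumes i: "i \<in> tor_S ht X Y a (Suc t)" and j: "j < n" "j \<notin> tor_S ht X Y a (Suc t)"
  shows "\<bar>(Y - X *\<^sub>v ols X Y (tor_S ht X Y a t)) $ i\<bar> \<le> \<bar>(Y - X *\<^sub>v ols X Y (tor_S ht X Y a t)) $ j\<bar>"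
proof -
  define f where "f = (\<lambda>i. \<bar>(Y - X *\<^sub>v ols X Y (tor_S ht X Y a t)) $ i\<bar>)"
  have "\<forall>i \<in> ht f a. \<forall>j<n. j \<notin> ht f a \<longrightarrow> f i \<le> f j" using HTp[OF an, of f] by blast
  moreover have "tor_S ht X Y a (Suc t) = ht f a" unfolding f_def by simp
  ultimately show ?thesis using i j unfolding f_def by auto
qed

lemma S_ex: "\<exists>S'. S' \<subseteq> tor_S ht X Y a t \<and> card S' = a"
proof (cases t)
  case 0
  then show ?thesis using dimY by (intro exI[of _ "{..<a}"]) auto
next
  case (Suc t')
  then show ?thesis using S_card by blast
qed

lemma ols_S: "ols X Y (tor_S ht X Y a t) \<in> carrier_vec d"
  "\<And>cc. cc \<in> carrier_vec d \<Longrightarrow>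
     (\<Sum>i\<in>tor_S ht X Y a t. (X *\<^sub>v ols X Y (tor_S ht X Y a t)) $ i * (X *\<^sub>v cc) $ i)
      = (\<Sum>i\<in>tor_S ht X Y a t. Y $ i * (X *\<^sub>v cc) $ i)"
  using S_ex[of t] ols_P[OF S_sub] by blast+

lemma err_Suc: "tor_err ht X Y a (Suc t) =
   L2_set (\<lambda>i. Y $ i - (X *\<^sub>v ols X Y (tor_S ht X Y a t)) $ i) (tor_S ht X Y a (Suc t))"
proof -
  have "tor_err ht X Y a (Suc t) = norm2 (map_vec abs (subvec Y (tor_S ht X Y a (Suc t))
      - rows X (tor_S ht X Y a (Suc t)) *\<^sub>v ols X Y (tor_S ht X Y a t)))"
    unfolding tor_err_def tor_beta_def by simp
  also have "\<dots> = L2_set (\<lambda>i. Y $ i - (X *\<^sub>v ols X Y (tor_S ht X Y a t)) $ i) (tor_S ht X Y a (Suc t))"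
    by (rule err_L2[OF X S_sub Y ols_S(1)])
  finally show ?thesis .
qed

lemma err_0: "tor_err ht X Y a 0 = L2_set (\<lambda>i. Y $ i) {..<n}"
  unfolding tor_err_def norm2_L2 dimY by simp

lemma term_ex: "\<exists>t. t \<ge> 1 \<and> \<not> tor_err ht X Y a t < tor_err ht X Y a (t - 1)"
proof (rule ccontr)
  assume "\<not> ?thesis"
  then have dec: "\<And>t. tor_err ht X Y a (Suc t) < tor_err ht X Y a t"
    by (metis One_nat_def Suc_le_mono diff_Suc_1 le0 not_less)
  have "\<not> inj (\<lambda>t. tor_S ht X Y a t)"
  proof
    assume inj: "inj (\<lambda>t. tor_S ht X Y a t)"
    have "range (\<lambda>t. tor_S ht X Y a t) \<subseteq> Pow {..<n}" using S_sub by auto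
    then have "finite (range (\<lambda>t. tor_S ht X Y a t))" by (rule finite_subset) simp
    then have "finite (UNIV :: nat set)" using finite_imageD inj by blast
    then show False by simp
  qed
  then obtain i j where ij: "i \<noteq> j" "tor_S ht X Y a i = tor_S ht X Y a j" unfolding inj_def by blast
  have eq: "tor_err ht X Y a (Suc i) = tor_err ht X Y a (Suc j)"
    unfolding tor_err_def tor_beta_def using ij(2) by simp
  have "\<And>i j. i < j \<Longrightarrow> tor_err ht X Y a j < tor_err ht X Y a i"
    using lift_Suc_mono_less[of "\<lambda>t. - tor_err ht X Y a t"] dec by force
  then show False using eq ij(1)
    by (metis Suc_less_eq less_irrefl nat_neq_iff)
qed


lemma L2_le_sq: "L2_set f A \<le> L2_set g B \<Longrightarrow> (\<Sum>i\<in>A. (f i)^2) \<le> (\<Sum>i\<in>B. (g i)^2)"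
  unfolding L2_sq[symmetric] by (intro power_mono) simp_all

lemma NE_at: assumes nd: "\<not> tor_err ht X Y a (Suc t0) < tor_err ht X Y a t0"
  and cc: "cc \<in> carrier_vec d"
  shows "(\<Sum>i\<in>tor_S ht X Y a (Suc t0). (Y $ i - (X *\<^sub>v ols X Y (tor_S ht X Y a t0)) $ i) * (X *\<^sub>v cc) $ i) = 0"
proof -
  define P where "P = tor_S ht X Y a t0"
  define S where "S = tor_S ht X Y a (Suc t0)"
  define bh where "bh = ols X Y P"
  define R where "R i = Y $ i - (X *\<^sub>v bh) $ i" for i
  have P: "P \<subseteq> {..<n}" and S: "S \<subseteq> {..<n}" unfolding P_def S_def by (rule S_sub)+
  have finP: "finite P" and finS: "finite S" using P S finite_subset by blast+
  have bh: "bh \<in> carrier_vec d" unfolding bh_def P_def by (rule ols_S(1))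
  have NEP: "\<And>cc. cc \<in> carrier_vec d \<Longrightarrow>
     (\<Sum>i\<in>P. (X *\<^sub>v bh) $ i * (X *\<^sub>v cc) $ i) = (\<Sum>i\<in>P. Y $ i * (X *\<^sub>v cc) $ i)"
    unfolding bh_def P_def by (rule ols_S(2))
  have NEP': "(\<Sum>i\<in>P. R i * (X *\<^sub>v cc) $ i) = 0"
    unfolding R_def using NEP[OF cc] by (simp add: left_diff_distrib sum_subtractf)
  have errS: "tor_err ht X Y a (Suc t0) = L2_set R S"
    unfolding err_Suc R_def bh_def P_def S_def ..
  show ?thesis
  proof (cases t0)
    case 0
    have Pn: "P = {..<n}" unfolding P_def 0 using dimY by simp
    have err0: "tor_err ht X Y a t0 = L2_set (\<lambda>i. Y $ i) {..<n}" unfolding 0 by (rule err_0)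
    have z: "0\<^sub>v d \<in> carrier_vec d" by simp
    have X0: "\<And>i. i < n \<Longrightarrow> (X *\<^sub>v 0\<^sub>v d) $ i = 0" using X by simp
    have "(\<Sum>i\<in>P. (Y $ i - (X *\<^sub>v 0\<^sub>v d) $ i)^2) =
         (\<Sum>i\<in>P. (R i)^2) + (\<Sum>i\<in>P. ((X *\<^sub>v (bh - 0\<^sub>v d)) $ i)^2)"
      unfolding R_def by (rule pyth[OF P bh z NEP])
    moreover have "(\<Sum>i\<in>P. (Y $ i - (X *\<^sub>v 0\<^sub>v d) $ i)^2) = (\<Sum>i\<in>{..<n}. (Y $ i)^2)"
      unfolding Pn by (rule sum.cong) (simp_all add: X0)
    moreover have "(\<Sum>i\<in>{..<n}. (Y $ i)^2) \<le> (\<Sum>i\<in>S. (R i)^2)"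
      using nd unfolding errS err0 by (intro L2_le_sq) simp
    moreover have "(\<Sum>i\<in>P. (R i)^2) = (\<Sum>i\<in>P - S. (R i)^2) + (\<Sum>i\<in>S. (R i)^2)"
      using S Pn finP by (intro sum.subset_diff) auto
    moreover have "0 \<le> (\<Sum>i\<in>P. ((X *\<^sub>v (bh - 0\<^sub>v d)) $ i)^2)" by (simp add: sum_nonneg)
    ultimately have "(\<Sum>i\<in>P - S. (R i)^2) \<le> 0" by linarith
    then have "(\<Sum>i\<in>P - S. (R i)^2) = 0" by (simp add: sum_nonneg antisym)
    then have R0: "\<forall>i\<in>P - S. R i = 0" using finP by (simp add: sum_nonneg_eq_0_iff)
    have "(\<Sum>i\<in>P. R i * (X *\<^sub>v cc) $ i) = (\<Sum>i\<in>P - S. R i * (X *\<^sub>v cc) $ i) + (\<Sum>i\<in>S. R i * (X *\<^sub>v cc) $ i)"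
      using S Pn finP by (intro sum.subset_diff) auto
    also have "(\<Sum>i\<in>P - S. R i * (X *\<^sub>v cc) $ i) = 0" using R0 by simp
    finally show ?thesis using NEP' unfolding R_def bh_def P_def S_def by simp
  next
    case (Suc t1)
    define P0 where "P0 = tor_S ht X Y a t1"
    define b' where "b' = ols X Y P0"
    have b': "b' \<in> carrier_vec d" unfolding b'_def P0_def by (rule ols_S(1))
    have errP: "tor_err ht X Y a t0 = L2_set (\<lambda>i. Y $ i - (X *\<^sub>v b') $ i) P"
      unfolding Suc err_Suc b'_def P0_def P_def Suc ..
    have cP: "card P = a" unfolding P_def Suc by (rule S_card)
    have cS: "card S = a" unfolding S_def by (rule S_card)
    have le1: "(\<Sum>i\<in>P. (Y $ i - (X *\<^sub>v b') $ i)^2) \<le> (\<Sum>i\<in>S. (R i)^2)"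
      using nd unfolding errS errP by (intro L2_le_sq) simp
    have le2: "(\<Sum>i\<in>S. (R i)^2) \<le> (\<Sum>i\<in>P. (R i)^2)"
    proof -
      have "(\<Sum>i\<in>S - P. (R i)^2) \<le> (\<Sum>i\<in>P - S. (R i)^2)"
      proof (rule sum_sq_le)
        show "finite (P - S)" using finP by simp
        have "card (S - P) = card S - card (S \<inter> P)" using finS by (intro card_Diff_subset_Int) simp
        moreover have "card (P - S) = card P - card (P \<inter> S)" using finP by (intro card_Diff_subset_Int) simp
        ultimately show "card (S - P) \<le> card (P - S)" using cP cS by (simp add: Int_commute)
        fix i j assume i: "i \<in> S - P" and j: "j \<in> P - S"
        have i': "i \<in> S" "i < n" using i S by auto
        have j': "j < n" "j \<notin> S" using j P by auto
        have "\<bar>(Y - X *\<^sub>v bh) $ i\<bar> \<le> \<bar>(Y - X *\<^sub>v bh) $ j\<bar>"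
          using S_HT[of i t0 j] i'(1) j' unfolding S_def bh_def P_def by blast
        then show "\<bar>R i\<bar> \<le> \<bar>R j\<bar>" unfolding R_def using res_i[OF bh i'(2)] res_i[OF bh j'(1)] by simp
      qed
      moreover have "(\<Sum>i\<in>S. (R i)^2) = (\<Sum>i\<in>S \<inter> P. (R i)^2) + (\<Sum>i\<in>S - P. (R i)^2)"
        using finS by (rule sum.Int_Diff)
      moreover have "(\<Sum>i\<in>P. (R i)^2) = (\<Sum>i\<in>P \<inter> S. (R i)^2) + (\<Sum>i\<in>P - S. (R i)^2)"
        using finP by (rule sum.Int_Diff)
      ultimately show ?thesis by (simp add: Int_commute)
    qed
    have py: "(\<Sum>i\<in>P. (Y $ i - (X *\<^sub>v b') $ i)^2) =
         (\<Sum>i\<in>P. (R i)^2) + (\<Sum>i\<in>P. ((X *\<^sub>v (bh - b')) $ i)^2)"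
      unfolding R_def by (rule pyth[OF P bh b' NEP])
    have "(\<Sum>i\<in>P. ((X *\<^sub>v (bh - b')) $ i)^2) \<le> 0" using le1 le2 py by linarith
    then have "(\<Sum>i\<in>P. ((X *\<^sub>v (bh - b')) $ i)^2) = 0" by (simp add: sum_nonneg antisym)
    moreover have dc: "bh - b' \<in> carrier_vec d" using bh b' by simp
    ultimately have nz: "(norm2 (rows X P *\<^sub>v (bh - b')))^2 = 0"
      unfolding rows_norm[OF X P dc] L2_sq by simp
    have RP: "rows X P \<in> carrier_mat (card P) d" by (rule rows_dim[OF X P])
    have lp: "lambda_min (transpose_mat (rows X P) * rows X P) > 0" using lam P cP by blast
    have "lambda_min (transpose_mat (rows X P) * rows X P) * (norm2 (bh - b'))^2 \<le> 0"
      using rayleigh[OF RP dc] nz by simp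
    then have "(norm2 (bh - b'))^2 \<le> 0" using lp by (simp add: mult_le_0_iff)
    then have "norm2 (bh - b') = 0" by simp
    then have "bh - b' = 0\<^sub>v d" by (rule norm2_eq0[OF dc])
    then have z0: "bh - b' = 0\<^sub>v d" .
    have eqb: "bh = b'"
    proof (rule eq_vecI)
      fix i assume "i < dim_vec b'"
      then have i: "i < d" using b' by simp
      have "(bh - b') $ i = 0" using z0 i by simp
      then show "bh $ i = b' $ i" using bh b' i by simp
    qed (use bh b' in simp)
    have Seq: "S = ht (\<lambda>i. \<bar>(Y - X *\<^sub>v bh) $ i\<bar>) a" unfolding S_def bh_def P_def by simp
    have Peq: "P = ht (\<lambda>i. \<bar>(Y - X *\<^sub>v b') $ i\<bar>) a" unfolding P_def b'_def P0_def Suc by simp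
    have "S = P" unfolding Seq Peq eqb ..
    then show ?thesis using NEP' unfolding R_def bh_def P_def S_def by simp
  qed
qed


end

lemma two_parts: assumes "finite A" "finite B" "A \<inter> B = {}"
  shows "L2_set f A + L2_set f B \<le> sqrt 2 * L2_set f (A \<union> B)"
proof -
  define x where "x = L2_set f A"
  define y where "y = L2_set f B"
  have x: "x \<ge> 0" and y: "y \<ge> 0" unfolding x_def y_def by simp_all
  have U: "(L2_set f (A \<union> B))^2 = x^2 + y^2"
    unfolding L2_sq x_def y_def using assms by (simp add: sum.union_disjoint)
  have "(x + y)^2 \<le> 2 * (x^2 + y^2)" by (simp add: power2_sum) (smt (verit) sum_squares_bound)
  also have "\<dots> = (sqrt 2 * L2_set f (A \<union> B))^2" unfolding power_mult_distrib U by simp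
  finally show ?thesis unfolding x_def[symmetric] y_def[symmetric]
    by (rule power2_le_imp_le) simp
qed

lemma norm2_add_le: assumes "u \<in> carrier_vec d" "v \<in> carrier_vec d"
  shows "norm2 (u + v) \<le> norm2 u + norm2 v"
proof -
  have "norm2 (u + v) = L2_set (\<lambda>i. u $ i + v $ i) {..<d}"
    unfolding norm2_L2 using assms by (intro L2_set_cong) auto
  also have "\<dots> \<le> L2_set (\<lambda>i. u $ i) {..<d} + L2_set (\<lambda>i. v $ i) {..<d}"
    by (rule L2_set_triangle_ineq)
  finally show ?thesis unfolding norm2_L2 using assms by simp
qed

lemma L2_subset: "finite B \<Longrightarrow> A \<subseteq> B \<Longrightarrow> L2_set f A \<le> L2_set f B"
  unfolding L2_set_def by (intro real_sqrt_le_mono sum_mono2) auto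

lemma L2_uminus: "L2_set (\<lambda>i. - f i) A = L2_set f A"
  unfolding L2_set_def by simp

lemma L2_tri3: "L2_set (\<lambda>i. f i + g i + h i) A \<le> L2_set f A + L2_set g A + L2_set h A"
  by (rule order_trans[OF L2_set_triangle_ineq]) (simp add: L2_set_triangle_ineq)


context tor_setting
begin

lemma T_obtain: obtains t0 where "tor_T ht X Y a = Suc t0"
  "\<not> tor_err ht X Y a (Suc t0) < tor_err ht X Y a t0"
proof -
  have "tor_T ht X Y a \<ge> 1 \<and> \<not> tor_err ht X Y a (tor_T ht X Y a) < tor_err ht X Y a (tor_T ht X Y a - 1)"
    unfolding tor_T_def by (rule LeastI_ex[OF term_ex])
  then obtain t0 where "tor_T ht X Y a = Suc t0" "\<not> tor_err ht X Y a (Suc t0) < tor_err ht X Y a t0"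
    by (metis One_nat_def Suc_le_D diff_Suc_1)
  then show ?thesis using that by blast
qed

lemma main:
  shows "let St = torrent_set ht X Y (n - c);
             XS = rows X St;
             w = minv (transpose_mat XS * XS) *\<^sub>v (transpose_mat XS *\<^sub>v subvec \<epsilon> St)
         in norm2 (torrent ht X Y (n - c) - \<beta>)
            \<le> norm2 w + (sqrt 2 * spec_norm (rows X (Vset n G St)) * norm2 w
                          + sqrt 2 * norm2 (subvec \<epsilon> (Vset n G St)))
                / (sqrt (lambda_min (transpose_mat XS * XS)) * (1 - sqrt 2 * eta X n G (n - c)))"
proof -
  obtain t0 where T: "tor_T ht X Y a = Suc t0"
    and nd: "\<not> tor_err ht X Y a (Suc t0) < tor_err ht X Y a t0" by (rule T_obtain)
  define S where "S = torrent_set ht X Y a"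
  define bh where "bh = torrent ht X Y a"
  have Sdef: "S = tor_S ht X Y a (Suc t0)" unfolding S_def torrent_set_def T ..
  have bhdef: "bh = ols X Y (tor_S ht X Y a t0)" unfolding bh_def torrent_def T tor_beta_def by simp
  define XS where "XS = rows X S"
  define M where "M = transpose_mat XS * XS"
  define w where "w = minv M *\<^sub>v (transpose_mat XS *\<^sub>v subvec \<epsilon> S)"
  define V where "V = Vset n G S"
  define lm where "lm = lambda_min M"
  define et where "et = eta X n G a"
  define sn where "sn = spec_norm (rows X V)"
  define E where "E = norm2 (subvec \<epsilon> V)"
  define Gc where "Gc = {..<n} - G"
  have Sn: "S \<subseteq> {..<n}" unfolding Sdef by (rule S_sub)
  have cS: "card S = a" unfolding Sdef by (rule S_card)
  have finS: "finite S" using Sn finite_subset by blast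
  have lm: "lm > 0" unfolding lm_def M_def XS_def using lam Sn cS by blast
  obtain Mi where Mi: "Mi \<in> carrier_mat d d" "M * Mi = 1\<^sub>m d" "Mi * M = 1\<^sub>m d"
    using inv_P[OF Sn order.refl cS] unfolding M_def XS_def by blast
  have XSc: "XS \<in> carrier_mat (card S) d" unfolding XS_def by (rule rows_dim[OF X Sn])
  have Mc: "M \<in> carrier_mat d d" unfolding M_def using XSc by simp
  have mi: "minv M = Mi" by (rule minv_inv[OF Mc Mi])
  have wd: "w = Mi *\<^sub>v (transpose_mat (rows X S) *\<^sub>v subvec \<epsilon> S)" unfolding w_def mi XS_def ..
  have w: "w \<in> carrier_vec d" by (rule solve(1)[OF X Sn Mi(1) Mi(2)[unfolded M_def XS_def] \<epsilon> wd])
  have wNE: "\<And>cc. cc \<in> carrier_vec d \<Longrightarrow>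
     (\<Sum>i\<in>S. (X *\<^sub>v w) $ i * (X *\<^sub>v cc) $ i) = (\<Sum>i\<in>S. \<epsilon> $ i * (X *\<^sub>v cc) $ i)"
    by (rule solve(2)[OF X Sn Mi(1) Mi(2)[unfolded M_def XS_def] \<epsilon> wd])
  have bh: "bh \<in> carrier_vec d" unfolding bhdef by (rule ols_S(1))
  have NE: "\<And>cc. cc \<in> carrier_vec d \<Longrightarrow> (\<Sum>i\<in>S. (Y $ i - (X *\<^sub>v bh) $ i) * (X *\<^sub>v cc) $ i) = 0"
    unfolding Sdef bhdef by (rule NE_at[OF nd])
  define h where "h = bh - \<beta>"
  define z where "z = h - w"
  have h: "h \<in> carrier_vec d" unfolding h_def using bh \<beta> by simp
  have z: "z \<in> carrier_vec d" unfolding z_def using h w by simp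
  define r where "r i = Y $ i - (X *\<^sub>v bh) $ i" for i
  have r_i: "r i = \<epsilon> $ i + out $ i - (X *\<^sub>v h) $ i" if i: "i < n" for i
    unfolding r_def h_def Xdiff[OF X bh \<beta> i] Yi[OF i] by simp
  have z_i: "(X *\<^sub>v z) $ i = (X *\<^sub>v h) $ i - (X *\<^sub>v w) $ i" if i: "i < n" for i
    unfolding z_def by (rule Xdiff[OF X h w i])
  have key: "(\<Sum>i\<in>S. (X *\<^sub>v z) $ i * (X *\<^sub>v cc) $ i) = (\<Sum>i\<in>S. out $ i * (X *\<^sub>v cc) $ i)"
    if cc: "cc \<in> carrier_vec d" for cc
  proof -
    have "(\<Sum>i\<in>S. (X *\<^sub>v z) $ i * (X *\<^sub>v cc) $ i) = (\<Sum>i\<in>S. out $ i * (X *\<^sub>v cc) $ i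
        + (\<epsilon> $ i * (X *\<^sub>v cc) $ i - (X *\<^sub>v w) $ i * (X *\<^sub>v cc) $ i) - r i * (X *\<^sub>v cc) $ i)"
    proof (rule sum.cong)
      fix i assume "i \<in> S"
      then have i: "i < n" using Sn by auto
      show "(X *\<^sub>v z) $ i * (X *\<^sub>v cc) $ i = out $ i * (X *\<^sub>v cc) $ i
        + (\<epsilon> $ i * (X *\<^sub>v cc) $ i - (X *\<^sub>v w) $ i * (X *\<^sub>v cc) $ i) - r i * (X *\<^sub>v cc) $ i"
        unfolding z_i[OF i] r_i[OF i] by (simp add: algebra_simps)
    qed simp
    also have "\<dots> = (\<Sum>i\<in>S. out $ i * (X *\<^sub>v cc) $ i)
        + ((\<Sum>i\<in>S. \<epsilon> $ i * (X *\<^sub>v cc) $ i) - (\<Sum>i\<in>S. (X *\<^sub>v w) $ i * (X *\<^sub>v cc) $ i))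
        - (\<Sum>i\<in>S. r i * (X *\<^sub>v cc) $ i)"
      by (simp add: sum.distrib sum_subtractf)
    also have "(\<Sum>i\<in>S. r i * (X *\<^sub>v cc) $ i) = 0" unfolding r_def by (rule NE[OF cc])
    finally show ?thesis using wNE[OF cc] by simp
  qed

  have finn: "finite {..<n}" by simp
  define Lz where "Lz = L2_set (\<lambda>i. (X *\<^sub>v z) $ i) S"
  define Lo where "Lo = L2_set (\<lambda>i. out $ i) (S \<inter> G)"
  have Lz0: "Lz \<ge> 0" and Lo0: "Lo \<ge> 0" unfolding Lz_def Lo_def by simp_all
  have "Lz^2 = (\<Sum>i\<in>S. (X *\<^sub>v z) $ i * (X *\<^sub>v z) $ i)" unfolding Lz_def L2_sq by (simp add: power2_eq_square)
  also have "\<dots> = (\<Sum>i\<in>S. out $ i * (X *\<^sub>v z) $ i)" by (rule key[OF z])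
  also have "\<dots> = (\<Sum>i\<in>S \<inter> G. out $ i * (X *\<^sub>v z) $ i)"
  proof -
    have "(\<Sum>i\<in>S. out $ i * (X *\<^sub>v z) $ i) = (\<Sum>i\<in>S \<inter> G. out $ i * (X *\<^sub>v z) $ i)
        + (\<Sum>i\<in>S - G. out $ i * (X *\<^sub>v z) $ i)" using finS by (rule sum.Int_Diff)
    moreover have "(\<Sum>i\<in>S - G. out $ i * (X *\<^sub>v z) $ i) = 0"
      using outG Sn by (intro sum.neutral) auto
    ultimately show ?thesis by simp
  qed
  also have "\<dots> \<le> (\<Sum>i\<in>S \<inter> G. \<bar>out $ i\<bar> * \<bar>(X *\<^sub>v z) $ i\<bar>)"
    by (rule sum_mono) (simp add: abs_mult[symmetric])
  also have "\<dots> \<le> Lo * L2_set (\<lambda>i. (X *\<^sub>v z) $ i) (S \<inter> G)" unfolding Lo_def by (rule L2_set_mult_ineq)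
  also have "\<dots> \<le> Lo * Lz" unfolding Lz_def
    by (rule mult_left_mono[OF L2_subset[OF finS] Lo0]) auto
  finally have LL: "Lz^2 \<le> Lo * Lz" .
  have LzLo: "Lz \<le> Lo"
  proof (cases "Lz = 0")
    case True
    then show ?thesis using Lo0 by simp
  next
    case False
    then have "Lz > 0" using Lz0 by simp
    then show ?thesis using LL by (simp add: power2_eq_square mult_le_cancel_right)
  qed
  have "lm * (norm2 z)^2 \<le> Lz^2" unfolding lm_def M_def XS_def Lz_def rows_norm[OF X Sn z, symmetric]
    by (rule rayleigh[OF rows_dim[OF X Sn] z])
  then have "sqrt (lm * (norm2 z)^2) \<le> sqrt (Lz^2)" by (rule real_sqrt_le_mono)
  then have zb1: "sqrt lm * norm2 z \<le> Lo" using LzLo Lz0 by (simp add: real_sqrt_mult)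
  have SG: "S \<inter> G \<subseteq> {..<n}" and GS: "Gc - S \<subseteq> {..<n}" using Sn unfolding Gc_def by auto
  have finSG: "finite (S \<inter> G)" and finGS: "finite (Gc - S)" using SG GS finite_subset by blast+
  have "Lo = L2_set (\<lambda>i. r i + - (\<epsilon> $ i) + (X *\<^sub>v h) $ i) (S \<inter> G)"
    unfolding Lo_def using SG by (intro L2_set_cong) (auto simp: r_i)
  also have "\<dots> \<le> L2_set r (S \<inter> G) + L2_set (\<lambda>i. - (\<epsilon> $ i)) (S \<inter> G) + L2_set (\<lambda>i. (X *\<^sub>v h) $ i) (S \<inter> G)"
    by (rule L2_tri3)
  finally have Lo1: "Lo \<le> L2_set r (S \<inter> G) + L2_set (\<lambda>i. \<epsilon> $ i) (S \<inter> G) + L2_set (\<lambda>i. (X *\<^sub>v h) $ i) (S \<inter> G)"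
    unfolding L2_uminus .
  have cGc: "card Gc = n - card G" unfolding Gc_def
    using card_Diff_subset[OF finite_subset[OF G finite_lessThan] G] by simp
  have rr: "L2_set r (S \<inter> G) \<le> L2_set r (Gc - S)"
  proof -
    have "(\<Sum>i\<in>S \<inter> G. (r i)^2) \<le> (\<Sum>i\<in>Gc - S. (r i)^2)"
    proof (rule sum_sq_le[OF finGS])
      have "card S = card (S \<inter> G) + card (S - G)" using finS by (rule card_Int_Diff)
      moreover have "S - G = S \<inter> Gc" using Sn unfolding Gc_def by auto
      moreover have "card Gc = card (Gc \<inter> S) + card (Gc - S)" using finn unfolding Gc_def
        by (intro card_Int_Diff) simp
      ultimately show "card (S \<inter> G) \<le> card (Gc - S)" using cS cGc cG
        by (simp add: Int_commute)
      fix i j assume i: "i \<in> S \<inter> G" and j: "j \<in> Gc - S"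
      have i': "i \<in> S" "i < n" using i Sn by auto
      have j': "j < n" "j \<notin> S" using j unfolding Gc_def by auto
      have "\<bar>(Y - X *\<^sub>v bh) $ i\<bar> \<le> \<bar>(Y - X *\<^sub>v bh) $ j\<bar>"
        using S_HT[of i t0 j] i'(1) j' unfolding Sdef bhdef by blast
      then show "\<bar>r i\<bar> \<le> \<bar>r j\<bar>" unfolding r_def using res_i[OF bh i'(2)] res_i[OF bh j'(1)] by simp
    qed
    then show ?thesis unfolding L2_set_def by (rule real_sqrt_le_mono)
  qed
  have "L2_set r (Gc - S) = L2_set (\<lambda>i. \<epsilon> $ i + - ((X *\<^sub>v h) $ i)) (Gc - S)"
    using GS outG unfolding Gc_def by (intro L2_set_cong) (auto simp: r_i)
  also have "\<dots> \<le> L2_set (\<lambda>i. \<epsilon> $ i) (Gc - S) + L2_set (\<lambda>i. - ((X *\<^sub>v h) $ i)) (Gc - S)"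
    by (rule L2_set_triangle_ineq)
  finally have rGc: "L2_set r (Gc - S) \<le> L2_set (\<lambda>i. \<epsilon> $ i) (Gc - S) + L2_set (\<lambda>i. (X *\<^sub>v h) $ i) (Gc - S)"
    unfolding L2_uminus .
  have Vdef: "V = (S \<inter> G) \<union> (Gc - S)" unfolding V_def Vset_def Gc_def using Sn by auto
  have disj: "(S \<inter> G) \<inter> (Gc - S) = {}" unfolding Gc_def by auto
  have Vn: "V \<subseteq> {..<n}" unfolding Vdef using SG GS by auto
  have epsV: "L2_set (\<lambda>i. \<epsilon> $ i) (S \<inter> G) + L2_set (\<lambda>i. \<epsilon> $ i) (Gc - S) \<le> sqrt 2 * E"
  proof -
    have "E = L2_set (\<lambda>i. \<epsilon> $ i) V" unfolding E_def by (rule norm2_subvec) (use Vn \<epsilon> in simp)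
    then show ?thesis unfolding Vdef using two_parts[OF finSG finGS disj] by simp
  qed
  have RV: "rows X V \<in> carrier_mat (card V) d" by (rule rows_dim[OF X Vn])
  have hV: "L2_set (\<lambda>i. (X *\<^sub>v h) $ i) (S \<inter> G) + L2_set (\<lambda>i. (X *\<^sub>v h) $ i) (Gc - S) \<le> sqrt 2 * (sn * norm2 h)"
  proof -
    have "L2_set (\<lambda>i. (X *\<^sub>v h) $ i) (S \<inter> G) + L2_set (\<lambda>i. (X *\<^sub>v h) $ i) (Gc - S)
        \<le> sqrt 2 * L2_set (\<lambda>i. (X *\<^sub>v h) $ i) V" unfolding Vdef by (rule two_parts[OF finSG finGS disj])
    also have "L2_set (\<lambda>i. (X *\<^sub>v h) $ i) V = norm2 (rows X V *\<^sub>v h)" by (rule rows_norm[OF X Vn h, symmetric])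
    also have "\<dots> \<le> sn * norm2 h" unfolding sn_def by (rule spec_norm(1)[OF RV h])
    finally show ?thesis by simp
  qed
  have sn0: "sn \<ge> 0" unfolding sn_def by (rule spec_norm(2)[OF RV h])
  have hwz: "norm2 h \<le> norm2 w + norm2 z"
  proof -
    have "h = w + z" unfolding z_def using h w by auto
    then show ?thesis using norm2_add_le[OF w z] by simp
  qed
  have zb2: "sqrt lm * norm2 z \<le> sqrt 2 * E + sqrt 2 * sn * (norm2 w + norm2 z)"
  proof -
    have "sqrt lm * norm2 z \<le> Lo" by (rule zb1)
    also have "\<dots> \<le> sqrt 2 * E + sqrt 2 * (sn * norm2 h)" using Lo1 rr rGc epsV hV by linarith
    also have "\<dots> \<le> sqrt 2 * E + sqrt 2 * (sn * (norm2 w + norm2 z))"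
      using hwz sn0 by (intro add_left_mono mult_left_mono) simp_all
    finally show ?thesis by (simp add: mult.assoc)
  qed
  have slm: "sqrt lm > 0" using lm by simp
  have etage: "sn / sqrt lm \<le> et"
  proof -
    have fin: "finite {S. S \<subseteq> {..<n} \<and> card S = a}" by (rule finite_subset[of _ "Pow {..<n}"]) auto
    have "S \<in> {S. S \<subseteq> {..<n} \<and> card S = a}" using Sn cS by simp
    then have "sn / sqrt lm \<in> (\<lambda>S. spec_norm (rows X (Vset n G S)) /
       sqrt (lambda_min (transpose_mat (rows X S) * rows X S))) ` {S. S \<subseteq> {..<n} \<and> card S = a}"
      unfolding sn_def V_def lm_def M_def XS_def by blast
    then show ?thesis unfolding et_def eta_def by (rule Max_ge[OF finite_imageI[OF fin]])
  qed
  have sn_le: "sn \<le> et * sqrt lm" using etage slm by (simp add: divide_le_eq)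
  have et1: "sqrt 2 * et < 1" using eta unfolding et_def
    by (simp add: less_divide_eq mult.commute)
  define D where "D = sqrt lm * (1 - sqrt 2 * et)"
  have D: "D > 0" unfolding D_def using slm et1 by simp
  have "D * norm2 z \<le> sqrt lm * norm2 z - sqrt 2 * sn * norm2 z"
  proof -
    have "sqrt 2 * sn * norm2 z \<le> sqrt 2 * (et * sqrt lm) * norm2 z"
      using sn_le by (intro mult_right_mono mult_left_mono) simp_all
    then show ?thesis unfolding D_def by (simp add: algebra_simps)
  qed
  also have "\<dots> \<le> sqrt 2 * sn * norm2 w + sqrt 2 * E" using zb2 by (simp add: algebra_simps)
  finally have "norm2 z \<le> (sqrt 2 * sn * norm2 w + sqrt 2 * E) / D" using D
    by (simp add: le_divide_eq mult.commute)
  then have fin: "norm2 h \<le> norm2 w + (sqrt 2 * sn * norm2 w + sqrt 2 * E) / D" using hwz by linarith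
  show ?thesis unfolding Let_def
    using fin unfolding h_def bh_def D_def sn_def E_def V_def lm_def et_def w_def M_def XS_def S_def .
qed

end

theorem theorem3p3:
  fixes n d c :: nat and X :: "real mat" and \<beta> \<epsilon> out Y :: "real vec" and G :: "nat set"
    and ht :: "(nat \<Rightarrow> real) \<Rightarrow> nat \<Rightarrow> nat set"
  assumes "d \<le> n"
    and "X \<in> carrier_mat n d" and "\<beta> \<in> carrier_vec d"
    and "\<epsilon> \<in> carrier_vec n" and "out \<in> carrier_vec n"
    and "G \<subseteq> {..<n}" and "\<forall>i<n. i \<notin> G \<longrightarrow> out $ i = 0"
    and "Y = X *\<^sub>v \<beta> + \<epsilon> + out"
    and "card G \<le> c"
    and "is_HT n ht"
    and "\<forall>S. S \<subseteq> {..<n} \<and> card S = n - c \<longrightarrow>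
           lambda_min (transpose_mat (rows X S) * rows X S) > 0"
    and "eta X n G (n - c) < 1 / sqrt 2"
  shows "let St = torrent_set ht X Y (n - c);
             XS = rows X St;
             w = minv (transpose_mat XS * XS) *\<^sub>v (transpose_mat XS *\<^sub>v subvec \<epsilon> St)
         in norm2 (torrent ht X Y (n - c) - \<beta>)
            \<le> norm2 w + (sqrt 2 * spec_norm (rows X (Vset n G St)) * norm2 w
                          + sqrt 2 * norm2 (subvec \<epsilon> (Vset n G St)))
                / (sqrt (lambda_min (transpose_mat XS * XS)) * (1 - sqrt 2 * eta X n G (n - c)))"
proof -
  interpret tor_setting n d c X \<beta> \<epsilon> out Y G ht
    using assms by (unfold_locales) auto
  show ?thesis by (rule main)
qed

end
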